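(* Let $M^2$ be a strongly regular minimal surface of general type in $\mathbb R^4$ parameterized by canonical parameters $(u,v)$ (semi-canonical with $E=G=|\mu^2-\nu^2|^{-1/2}$). Then $$\gamma_1=\big(|\mu^2-\nu^2|^{1/4}\big)_v,\quad \gamma_2=\big(|\mu^2-\nu^2|^{1/4}\big)_u,\quad \beta_1=-|\mu^2-\nu^2|^{1/4}\Big(\ln\sqrt{\big|\tfrac{\mu+\nu}{\mu-\nu}\big|}\Big)_v,\quad \beta_2=|\mu^2-\nu^2|^{1/4}\Big(\ln\sqrt{\big|\tfrac{\mu+\nu}{\mu-\nu}\big|}\Big)_u,$$ and the invariants $\mu,\nu$ satisfy $$\tfrac14\sqrt{|\mu^2-\nu^2|}\,\Delta\ln|\mu^2-\nu^2|+\nu^2+\mu^2=0,\qquad \tfrac12\sqrt{|\mu^2-\nu^2|}\,\Delta\ln\Big|\frac{\mu+\nu}{\mu-\nu}\Big|+2\nu\mu=0,$$ where $\Delta=\partial_u^2+\partial_v^2$. Equivalently, in terms of $K$ and $\varkappa$: $\tfrac18(K^2-\varkappa^2)^{1/4}\Delta\ln(K^2-\varkappa^2)-K=0$ and $\tfrac14(K^2-\varkappa^2)^{1/4}\Delta\ln\frac{K-\varkappa}{K+\varkappa}+\varkappa=0$.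
   Context: $\mathbb R^4$ carries the standard metric $g=\langle\cdot,\cdot\rangle$ and flat connection $\nabla'$; everything is smooth and local. For a regular surface $M^2: z=z(u,v)$ let $E,F,G$ be the first fundamental form coefficients, $\sigma$ the second fundamental form, $K$ the Gauss curvature, and $\varkappa$ the curvature of the normal connection, $\varkappa=g(R^\perp(x,y)n_2,n_1)$ for a positively oriented orthonormal frame $(x,y,n_1,n_2)$ with $x,y$ tangent. Minimal means $\sigma(x,x)+\sigma(y,y)=0$ for orthonormal tangent $x,y$. A minimal surface is of general type if $K^2-\varkappa^2>0$ and $\varkappa\neq0$ everywhere. The ellipse of curvature at $p$ is $\{\sigma(v,v): v\in T_pM^2,\ |v|=1\}$; a tangent line is canonical if it is collinear with an axis of this ellipse. The geometric frame is a positively oriented orthonormal frame $\{x,y,n_1,n_2\}$ with $x,y$ canonical tangent fields and $n_1,n_2$ normal, satisfying $\nabla'_xx=\gamma_1y+\nu n_1$, $\nabla'_xy=-\gamma_1x+\mu n_2$, $\nabla'_yx=-\gamma_2y+\mu n_2$, $\nabla'_yy=\gamma_2x-\nu n_1$, $\nabla'_xn_1=-\nu x+\beta_1n_2$, $\nabla'_yn_1=\nu y+\beta_2n_2$, $\nabla'_xn_2=-\mu y-\beta_1n_1$, $\nabla'_yn_2=-\mu x-\beta_2n_1$, with $\mu>0$, $\nu\ne0$, $\mu^2\ne\nu^2$; the functions $\nu,\mu,\gamma_1,\gamma_2,\beta_1,\beta_2$ are the invariants of $M^2$ (and $K=-(\mu^2+\nu^2)$, $\varkappa=2\nu\mu$).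 Parameters $(u,v)$ are semi-canonical if the parametric lines are integral curves of the canonical tangents, with $F=0$, $x=z_u/\sqrt E$, $y=z_v/\sqrt G$; then $\gamma_1=-y(\ln\sqrt E)$, $\gamma_2=-x(\ln\sqrt G)$. A minimal surface of general type is strongly regular if $\gamma_1\gamma_2\neq0$ everywhere. *)

theory Defs
  imports "HOL-Analysis.Analysis"
begin

text \<open>Parameter domain: an open subset U of the (u,v)-plane, points are pairs (u,v).
  Surfaces and vector fields along them are maps into real^4 (standard metric = inner product).\<close>

definition pu :: "(real \<times> real \<Rightarrow> 'a::real_normed_vector) \<Rightarrow> real \<times> real \<Rightarrow> 'a" where
  "pu f p = vector_derivative (\<lambda>t. f (t, snd p)) (at (fst p))"

definition pv :: "(real \<times> real \<Rightarrow> 'a::real_normed_vector) \<Rightarrow> real \<times> real \<Rightarrow> 'a" where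
  "pv f p = vector_derivative (\<lambda>t. f (fst p, t)) (at (snd p))"

definition lap :: "(real \<times> real \<Rightarrow> real) \<Rightarrow> real \<times> real \<Rightarrow> real" where
  "lap f p = pu (pu f) p + pv (pv f) p"

text \<open>Iterated partial derivatives (False = d/du, True = d/dv).\<close>
fun iterpart :: "bool list \<Rightarrow> (real \<times> real \<Rightarrow> 'a::real_normed_vector) \<Rightarrow> real \<times> real \<Rightarrow> 'a" where
  "iterpart [] f = f"
| "iterpart (d # ds) f = (if d then pv (iterpart ds f) else pu (iterpart ds f))"

definition smooth2 :: "(real \<times> real) set \<Rightarrow> (real \<times> real \<Rightarrow> 'a::real_normed_vector) \<Rightarrow> bool" where
  "smooth2 U f \<longleftrightarrow> (\<forall>ds. continuous_on U (iterpart ds f) \<and>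
     (\<forall>p\<in>U. (\<lambda>t. iterpart ds f (t, snd p)) differentiable (at (fst p)) \<and>
             (\<lambda>t. iterpart ds f (fst p, t)) differentiable (at (snd p))))"

definition fE :: "(real \<times> real \<Rightarrow> real^4) \<Rightarrow> real \<times> real \<Rightarrow> real" where
  "fE z p = pu z p \<bullet> pu z p"
definition fF :: "(real \<times> real \<Rightarrow> real^4) \<Rightarrow> real \<times> real \<Rightarrow> real" where
  "fF z p = pu z p \<bullet> pv z p"
definition fG :: "(real \<times> real \<Rightarrow> real^4) \<Rightarrow> real \<times> real \<Rightarrow> real" where
  "fG z p = pv z p \<bullet> pv z p"

text \<open>Coordinates (a,b) of the tangential part a z_u + b z_v of a vector w.\<close>
definition tca :: "(real \<times> real \<Rightarrow> real^4) \<Rightarrow> real \<times> real \<Rightarrow> real^4 \<Rightarrow> real" where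
  "tca z p w = (fG z p * (w \<bullet> pu z p) - fF z p * (w \<bullet> pv z p)) / (fE z p * fG z p - (fF z p)\<^sup>2)"
definition tcb :: "(real \<times> real \<Rightarrow> real^4) \<Rightarrow> real \<times> real \<Rightarrow> real^4 \<Rightarrow> real" where
  "tcb z p w = (fE z p * (w \<bullet> pv z p) - fF z p * (w \<bullet> pu z p)) / (fE z p * fG z p - (fF z p)\<^sup>2)"

definition tproj :: "(real \<times> real \<Rightarrow> real^4) \<Rightarrow> real \<times> real \<Rightarrow> real^4 \<Rightarrow> real^4" where
  "tproj z p w = tca z p w *\<^sub>R pu z p + tcb z p w *\<^sub>R pv z p"
definition nproj :: "(real \<times> real \<Rightarrow> real^4) \<Rightarrow> real \<times> real \<Rightarrow> real^4 \<Rightarrow> real^4" where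
  "nproj z p w = w - tproj z p w"

text \<open>Flat connection: derivative of the field X (along the surface) in the direction of
  the tangent field w, i.e. nabla'_w X = a X_u + b X_v where w = a z_u + b z_v.\<close>
definition Dflat :: "(real \<times> real \<Rightarrow> real^4) \<Rightarrow> (real \<times> real \<Rightarrow> real^4) \<Rightarrow> (real \<times> real \<Rightarrow> real^4)
    \<Rightarrow> real \<times> real \<Rightarrow> real^4" where
  "Dflat z w X p = tca z p (w p) *\<^sub>R pu X p + tcb z p (w p) *\<^sub>R pv X p"

text \<open>Second fundamental form on coordinate fields and Gauss curvature
  K = (<sigma(z_u,z_u),sigma(z_v,z_v)> - |sigma(z_u,z_v)|^2)/(EG-F^2) (Gauss equation).\<close>
definition gauss_curv :: "(real \<times> real \<Rightarrow> real^4) \<Rightarrow> real \<times> real \<Rightarrow> real" where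
  "gauss_curv z p =
     (nproj z p (pu (pu z) p) \<bullet> nproj z p (pv (pv z) p)
      - nproj z p (pu (pv z) p) \<bullet> nproj z p (pu (pv z) p))
     / (fE z p * fG z p - (fF z p)\<^sup>2)"

definition Dnu :: "(real \<times> real \<Rightarrow> real^4) \<Rightarrow> (real \<times> real \<Rightarrow> real^4) \<Rightarrow> real \<times> real \<Rightarrow> real^4" where
  "Dnu z \<xi> p = nproj z p (pu \<xi> p)"
definition Dnv :: "(real \<times> real \<Rightarrow> real^4) \<Rightarrow> (real \<times> real \<Rightarrow> real^4) \<Rightarrow> real \<times> real \<Rightarrow> real^4" where
  "Dnv z \<xi> p = nproj z p (pv \<xi> p)"

text \<open>Curvature of the normal connection kappa = g(R^perp(x,y) n2, n1) for an orthonormal tangent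
  pair (x,y) with the orientation of (z_u,z_v):
  R^perp(d_u,d_v) = sqrt(EG-F^2) R^perp(x,y), coordinate fields commute.\<close>
definition normal_curv :: "(real \<times> real \<Rightarrow> real^4) \<Rightarrow> (real \<times> real \<Rightarrow> real^4) \<Rightarrow> (real \<times> real \<Rightarrow> real^4)
    \<Rightarrow> real \<times> real \<Rightarrow> real" where
  "normal_curv z n1 n2 p =
     ((Dnu z (Dnv z n2) p - Dnv z (Dnu z n2) p) \<bullet> n1 p) / sqrt (fE z p * fG z p - (fF z p)\<^sup>2)"

definition geometric_frame ::
  "(real \<times> real) set \<Rightarrow> (real \<times> real \<Rightarrow> real^4) \<Rightarrow>
   (real \<times> real \<Rightarrow> real^4) \<Rightarrow> (real \<times> real \<Rightarrow> real^4) \<Rightarrow> (real \<times> real \<Rightarrow> real^4) \<Rightarrow> (real \<times> real \<Rightarrow> real^4) \<Rightarrow>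
   (real \<times> real \<Rightarrow> real) \<Rightarrow> (real \<times> real \<Rightarrow> real) \<Rightarrow> (real \<times> real \<Rightarrow> real) \<Rightarrow>
   (real \<times> real \<Rightarrow> real) \<Rightarrow> (real \<times> real \<Rightarrow> real) \<Rightarrow> (real \<times> real \<Rightarrow> real) \<Rightarrow> bool" where
  "geometric_frame U z x y n1 n2 \<nu> \<mu> \<gamma>1 \<gamma>2 \<beta>1 \<beta>2 \<longleftrightarrow>
    smooth2 U x \<and> smooth2 U y \<and> smooth2 U n1 \<and> smooth2 U n2 \<and>
    smooth2 U \<nu> \<and> smooth2 U \<mu> \<and> smooth2 U \<gamma>1 \<and> smooth2 U \<gamma>2 \<and> smooth2 U \<beta>1 \<and> smooth2 U \<beta>2 \<and>
    (\<forall>p\<in>U.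
      \<comment> \<open>orthonormal, positively oriented\<close>
      x p \<bullet> x p = 1 \<and> y p \<bullet> y p = 1 \<and> n1 p \<bullet> n1 p = 1 \<and> n2 p \<bullet> n2 p = 1 \<and>
      x p \<bullet> y p = 0 \<and> x p \<bullet> n1 p = 0 \<and> x p \<bullet> n2 p = 0 \<and>
      y p \<bullet> n1 p = 0 \<and> y p \<bullet> n2 p = 0 \<and> n1 p \<bullet> n2 p = 0 \<and>
      det (vector [x p, y p, n1 p, n2 p] :: real^4^4) > 0 \<and>
      \<comment> \<open>x, y tangent; n1, n2 normal\<close>
      tproj z p (x p) = x p \<and> tproj z p (y p) = y p \<and>
      n1 p \<bullet> pu z p = 0 \<and> n1 p \<bullet> pv z p = 0 \<and> n2 p \<bullet> pu z p = 0 \<and> n2 p \<bullet> pv z p = 0 \<and>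
      \<comment> \<open>structure (Frenet-type) equations\<close>
      Dflat z x x p = \<gamma>1 p *\<^sub>R y p + \<nu> p *\<^sub>R n1 p \<and>
      Dflat z x y p = - \<gamma>1 p *\<^sub>R x p + \<mu> p *\<^sub>R n2 p \<and>
      Dflat z y x p = - \<gamma>2 p *\<^sub>R y p + \<mu> p *\<^sub>R n2 p \<and>
      Dflat z y y p = \<gamma>2 p *\<^sub>R x p - \<nu> p *\<^sub>R n1 p \<and>
      Dflat z x n1 p = - \<nu> p *\<^sub>R x p + \<beta>1 p *\<^sub>R n2 p \<and>
      Dflat z y n1 p = \<nu> p *\<^sub>R y p + \<beta>2 p *\<^sub>R n2 p \<and>
      Dflat z x n2 p = - \<mu> p *\<^sub>R y p - \<beta>1 p *\<^sub>R n1 p \<and>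
      Dflat z y n2 p = - \<mu> p *\<^sub>R x p - \<beta>2 p *\<^sub>R n1 p \<and>
      \<mu> p > 0 \<and> \<nu> p \<noteq> 0 \<and> (\<mu> p)\<^sup>2 \<noteq> (\<nu> p)\<^sup>2)"

definition regular_surface :: "(real \<times> real) set \<Rightarrow> (real \<times> real \<Rightarrow> real^4) \<Rightarrow> bool" where
  "regular_surface U z \<longleftrightarrow> open U \<and> smooth2 U z \<and>
     (\<forall>p\<in>U. fE z p * fG z p - (fF z p)\<^sup>2 > 0)"

definition semi_canonical :: "(real \<times> real) set \<Rightarrow> (real \<times> real \<Rightarrow> real^4) \<Rightarrow>
   (real \<times> real \<Rightarrow> real^4) \<Rightarrow> (real \<times> real \<Rightarrow> real^4) \<Rightarrow> bool" where
  "semi_canonical U z x y \<longleftrightarrow>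
     (\<forall>p\<in>U. fF z p = 0 \<and> x p = (1 / sqrt (fE z p)) *\<^sub>R pu z p \<and> y p = (1 / sqrt (fG z p)) *\<^sub>R pv z p)"

definition canonical_params :: "(real \<times> real) set \<Rightarrow> (real \<times> real \<Rightarrow> real^4) \<Rightarrow>
   (real \<times> real \<Rightarrow> real^4) \<Rightarrow> (real \<times> real \<Rightarrow> real^4) \<Rightarrow>
   (real \<times> real \<Rightarrow> real) \<Rightarrow> (real \<times> real \<Rightarrow> real) \<Rightarrow> bool" where
  "canonical_params U z x y \<nu> \<mu> \<longleftrightarrow> semi_canonical U z x y \<and>
     (\<forall>p\<in>U. fE z p = \<bar>(\<mu> p)\<^sup>2 - (\<nu> p)\<^sup>2\<bar> powr (-1/2) \<and> fG z p = \<bar>(\<mu> p)\<^sup>2 - (\<nu> p)\<^sup>2\<bar> powr (-1/2))"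

end

theory Submission
  imports Defs
begin


definition DD :: "(real \<Rightarrow> real \<times> real) \<Rightarrow> (real \<times> real \<Rightarrow> 'a::real_normed_vector) \<Rightarrow> 'a \<Rightarrow> real \<Rightarrow> bool" where
  "DD l f d t \<longleftrightarrow> ((\<lambda>s. f (l s)) has_vector_derivative d) (at t)"

lemma DD_pu: "DD (\<lambda>t. (t, snd p)) f d (fst p) \<Longrightarrow> pu f p = d"
  unfolding DD_def pu_def by (rule vector_derivative_at)
lemma DD_pv: "DD (\<lambda>t. (fst p, t)) f d (snd p) \<Longrightarrow> pv f p = d"
  unfolding DD_def pv_def by (rule vector_derivative_at)

lemma DD_add: "DD l f a t \<Longrightarrow> DD l g b t \<Longrightarrow> DD l (\<lambda>q. f q + g q) (a + b) t"
  unfolding DD_def by (rule has_vector_derivative_add)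
lemma DD_diff: "DD l f a t \<Longrightarrow> DD l g b t \<Longrightarrow> DD l (\<lambda>q. f q - g q) (a - b) t"
  unfolding DD_def by (rule has_vector_derivative_diff)
lemma DD_minus: "DD l f a t \<Longrightarrow> DD l (\<lambda>q. - f q) (- a) t"
  unfolding DD_def by (rule has_vector_derivative_minus)
lemma DD_const: "DD l (\<lambda>q. c) 0 t"
  unfolding DD_def by (rule has_vector_derivative_const)
lemma DD_scale: "DD l f a t \<Longrightarrow> DD l g b t \<Longrightarrow> DD l (\<lambda>q. f q *\<^sub>R g q) (f (l t) *\<^sub>R b + a *\<^sub>R g (l t)) t"
  unfolding DD_def by (rule has_vector_derivative_scaleR) (simp_all add: has_real_derivative_iff_has_vector_derivative)
lemma DD_mult: "DD l (f::_\<Rightarrow>real) a t \<Longrightarrow> DD l g b t \<Longrightarrow> DD l (\<lambda>q. f q * g q) (f (l t) * b + a * g (l t)) t"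
  using DD_scale[of l f a t g b] by simp
lemma DD_inner: "DD l f a t \<Longrightarrow> DD l (\<lambda>q. f q \<bullet> w) (a \<bullet> w) t"
  unfolding DD_def
  by (rule bounded_linear.has_vector_derivative[OF bounded_linear_inner_left])
lemma DD_real: "DD l (f::_\<Rightarrow>real) a t \<longleftrightarrow> ((\<lambda>s. f (l s)) has_real_derivative a) (at t)"
  unfolding DD_def by (simp add: has_real_derivative_iff_has_vector_derivative)
lemma DD_inverse: "DD l (f::_\<Rightarrow>real) a t \<Longrightarrow> f (l t) \<noteq> 0 \<Longrightarrow> DD l (\<lambda>q. 1 / f q) (- a / (f (l t))^2) t"
  unfolding DD_real
  apply (drule DERIV_inverse_fun, assumption)
  by (simp add: divide_inverse power2_eq_square)
lemma DD_sqrt: "DD l (f::_\<Rightarrow>real) a t \<Longrightarrow> f (l t) > 0 \<Longrightarrow> DD l (\<lambda>q. sqrt (f q)) (a / (2 * sqrt (f (l t)))) t"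
  unfolding DD_real
  by (auto intro!: derivative_eq_intros simp: field_simps)
lemma DD_ln: "DD l (f::_\<Rightarrow>real) a t \<Longrightarrow> f (l t) > 0 \<Longrightarrow> DD l (\<lambda>q. ln (f q)) (a / f (l t)) t"
  unfolding DD_real
  by (auto intro!: derivative_eq_intros simp: field_simps)
lemma DD_abs: assumes "DD l (f::_\<Rightarrow>real) a t" "f (l t) \<noteq> 0" shows "DD l (\<lambda>q. \<bar>f q\<bar>) (sgn (f (l t)) * a) t"
proof -
  have "DD l (\<lambda>q. f q * f q) (f (l t) * a + a * f (l t)) t" by (rule DD_mult[OF assms(1) assms(1)])
  have "f (l t) * f (l t) > 0" using assms(2) by (cases "f (l t) > 0") (auto simp: mult_neg_neg)
  from DD_sqrt[OF \<open>DD l (\<lambda>q. f q * f q) _ t\<close> this] have "DD l (\<lambda>q. sqrt (f q * f q)) ((f (l t) * a + a * f (l t)) / (2 * sqrt (f (l t) * f (l t)))) t"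
    by simp
  moreover have "(f (l t) * a + a * f (l t)) / (2 * sqrt (f (l t) * f (l t))) = sgn (f (l t)) * a"
    using assms(2) by (simp add: real_sqrt_mult_self sgn_if field_simps)
  ultimately show ?thesis by (simp add: real_sqrt_mult_self)
qed

lemma DD_local:
  assumes "open U" "continuous_on UNIV l" "l t \<in> U" "\<And>q. q \<in> U \<Longrightarrow> f q = g q" "DD l g d t"
  shows "DD l f d t"
proof -
  have o: "open {s. l s \<in> U}" using assms(1,2) open_vimage[of U l] by (simp add: vimage_def)
  show ?thesis using assms(5) unfolding DD_def
    by (rule has_vector_derivative_transform_within_open[OF _ o]) (use assms in auto)
qed

lemma iterpart_pu: "iterpart ds (pu f) = iterpart (ds @ [False]) f"
  by (induction ds) auto
lemma iterpart_pv: "iterpart ds (pv f) = iterpart (ds @ [True]) f"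
  by (induction ds) auto
lemma smooth2_pu: "smooth2 U f \<Longrightarrow> smooth2 U (pu f)"
  unfolding smooth2_def iterpart_pu by blast
lemma smooth2_pv: "smooth2 U f \<Longrightarrow> smooth2 U (pv f)"
  unfolding smooth2_def iterpart_pv by blast
lemma smooth2_cont: "smooth2 U f \<Longrightarrow> continuous_on U f"
  unfolding smooth2_def using iterpart.simps(1) by metis
lemma smooth2_DU: assumes "smooth2 U f" "p \<in> U" shows "DD (\<lambda>t. (t, snd p)) f (pu f p) (fst p)"
proof -
  have "(\<lambda>t. f (t, snd p)) differentiable (at (fst p))"
    using assms unfolding smooth2_def using iterpart.simps(1) by metis
  then show ?thesis unfolding DD_def pu_def by (simp add: vector_derivative_works)
qed
lemma smooth2_DV: assumes "smooth2 U f" "p \<in> U" shows "DD (\<lambda>t. (fst p, t)) f (pv f p) (snd p)"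
proof -
  have "(\<lambda>t. f (fst p, t)) differentiable (at (snd p))"
    using assms unfolding smooth2_def using iterpart.simps(1) by metis
  then show ?thesis unfolding DD_def pv_def by (simp add: vector_derivative_works)
qed



lemma aux3: "(x::real) = y \<Longrightarrow> 0 < a - b \<Longrightarrow> - (x - a) < (a - b) / 3 \<Longrightarrow> y - b < (a - b) / 3 \<Longrightarrow> False"
  by (simp add: field_simps)

lemma schwarz:
  fixes f :: "real \<times> real \<Rightarrow> 'a::real_inner"
  assumes U: "open U" and pU: "p \<in> U" and sm: "smooth2 U f"
  shows "pv (pu f) p = pu (pv f) p"
proof (rule ccontr)
  assume ne: "pv (pu f) p \<noteq> pu (pv f) p"
  define w where "w = pv (pu f) p - pu (pv f) p"
  define F where "F q = f q \<bullet> w" for q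
  define A where "A q = pv (pu f) q \<bullet> w" for q
  define B where "B q = pu (pv f) q \<bullet> w" for q
  define d where "d = A p - B p"
  have d0: "d > 0" unfolding d_def A_def B_def using ne
    by (metis inner_diff_left inner_gt_zero_iff right_minus_eq w_def)
  obtain a b where p: "p = (a, b)" by (cases p)
  have smu: "smooth2 U (pu f)" and smv: "smooth2 U (pv f)" using sm smooth2_pu smooth2_pv by auto
  have cA: "isCont A p"
  proof -
    have "continuous_on U (pv (pu f))" using smooth2_cont[OF smooth2_pv[OF smu]] .
    then have "isCont (pv (pu f)) p" using U pU continuous_on_eq_continuous_at by blast
    then show ?thesis unfolding A_def by (intro continuous_intros)
  qed
  have cB: "isCont B p"
  proof -
    have "continuous_on U (pu (pv f))" using smooth2_cont[OF smooth2_pu[OF smv]] .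
    then have "isCont (pu (pv f)) p" using U pU continuous_on_eq_continuous_at by blast
    then show ?thesis unfolding B_def by (intro continuous_intros)
  qed
  obtain e1 where e1: "e1 > 0" "\<And>q. dist q p < e1 \<Longrightarrow> dist (A q) (A p) < d/3"
    using cA d0 unfolding continuous_at_eps_delta by (metis divide_pos_pos zero_less_numeral)
  obtain e2 where e2: "e2 > 0" "\<And>q. dist q p < e2 \<Longrightarrow> dist (B q) (B p) < d/3"
    using cB d0 unfolding continuous_at_eps_delta by (metis divide_pos_pos zero_less_numeral)
  obtain e3 where e3: "e3 > 0" "ball p e3 \<subseteq> U" using U pU open_contains_ball by blast
  define h where "h = min e1 (min e2 e3) / 2"
  have h0: "h > 0" unfolding h_def using e1 e2 e3 by simp
  have inball: "dist (s, t) p < min e1 (min e2 e3)" if "a \<le> s" "s \<le> a + h" "b \<le> t" "t \<le> b + h" for s t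
  proof -
    have "(s - a)\<^sup>2 + (t - b)\<^sup>2 \<le> h\<^sup>2 + h\<^sup>2" using that
      by (intro add_mono power_mono) auto
    also have "\<dots> < (min e1 (min e2 e3))\<^sup>2" unfolding h_def using e1 e2 e3 by (simp add: power2_eq_square)
    finally have "sqrt ((s - a)\<^sup>2 + (t - b)\<^sup>2) < sqrt ((min e1 (min e2 e3))\<^sup>2)" by (rule real_sqrt_less_mono)
    then show ?thesis using e1 e2 e3 by (simp add: p dist_Pair_Pair dist_real_def)
  qed
  have inU: "(s, t) \<in> U" if "a \<le> s" "s \<le> a + h" "b \<le> t" "t \<le> b + h" for s t
    using inball[OF that] e3 by (auto simp: dist_commute)
  have DUf: "DERIV (\<lambda>s. F (s, t)) s :> (pu f (s, t) \<bullet> w)" if "(s, t) \<in> U" for s t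
    using DD_inner[OF smooth2_DU[OF sm that], of w] unfolding DD_real F_def by simp
  have DVf: "DERIV (\<lambda>t. F (s, t)) t :> (pv f (s, t) \<bullet> w)" if "(s, t) \<in> U" for s t
    using DD_inner[OF smooth2_DV[OF sm that], of w] unfolding DD_real F_def by simp
  have DVfu: "DERIV (\<lambda>t. pu f (s, t) \<bullet> w) t :> A (s, t)" if "(s, t) \<in> U" for s t
    using DD_inner[OF smooth2_DV[OF smu that], of w] unfolding DD_real A_def by simp
  have DUfv: "DERIV (\<lambda>s. pv f (s, t) \<bullet> w) s :> B (s, t)" if "(s, t) \<in> U" for s t
    using DD_inner[OF smooth2_DU[OF smv that], of w] unfolding DD_real B_def by simp
  define Del where "Del = F (a + h, b + h) - F (a + h, b) - F (a, b + h) + F (a, b)"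
  have hab: "a < a + h" "b < b + h" using h0 by auto
  obtain \<xi> where \<xi>: "a < \<xi>" "\<xi> < a + h"
    "(F (a + h, b + h) - F (a + h, b)) - (F (a, b + h) - F (a, b)) = h * (pu f (\<xi>, b + h) \<bullet> w - pu f (\<xi>, b) \<bullet> w)"
    using MVT2[OF hab(1), of "\<lambda>s. F (s, b + h) - F (s, b)" "\<lambda>s. pu f (s, b + h) \<bullet> w - pu f (s, b) \<bullet> w"]
      DERIV_diff[OF DUf DUf] inU h0 by auto
  obtain \<eta> where \<eta>: "b < \<eta>" "\<eta> < b + h" "pu f (\<xi>, b + h) \<bullet> w - pu f (\<xi>, b) \<bullet> w = h * A (\<xi>, \<eta>)"
    using MVT2[OF hab(2), of "\<lambda>t. pu f (\<xi>, t) \<bullet> w" "\<lambda>t. A (\<xi>, t)"] DVfu inU \<xi> by auto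
  obtain \<eta>' where \<eta>': "b < \<eta>'" "\<eta>' < b + h"
    "(F (a + h, b + h) - F (a, b + h)) - (F (a + h, b) - F (a, b)) = h * (pv f (a + h, \<eta>') \<bullet> w - pv f (a, \<eta>') \<bullet> w)"
    using MVT2[OF hab(2), of "\<lambda>t. F (a + h, t) - F (a, t)" "\<lambda>t. pv f (a + h, t) \<bullet> w - pv f (a, t) \<bullet> w"]
      DERIV_diff[OF DVf DVf] inU h0 by auto
  obtain \<xi>' where \<xi>': "a < \<xi>'" "\<xi>' < a + h" "pv f (a + h, \<eta>') \<bullet> w - pv f (a, \<eta>') \<bullet> w = h * B (\<xi>', \<eta>')"
    using MVT2[OF hab(1), of "\<lambda>s. pv f (s, \<eta>') \<bullet> w" "\<lambda>s. B (s, \<eta>')"] DUfv inU \<eta>' by auto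
  have "h * (h * A (\<xi>, \<eta>)) = h * (h * B (\<xi>', \<eta>'))"
    using \<xi>(3) \<eta>(3) \<eta>'(3) \<xi>'(3) by (simp add: algebra_simps)
  then have AB: "A (\<xi>, \<eta>) = B (\<xi>', \<eta>')" using h0 by simp
  have "dist (A (\<xi>, \<eta>)) (A p) < d/3" using e1(2) inball[of \<xi> \<eta>] \<xi> \<eta> by auto
  moreover have "dist (B (\<xi>', \<eta>')) (B p) < d/3" using e2(2) inball[of \<xi>' \<eta>'] \<xi>' \<eta>' by auto
  ultimately show False using AB d0 unfolding d_def dist_real_def abs_less_iff by (elim conjE) (rule aux3)
qed



lemma DD_inner2: "DD l f a t \<Longrightarrow> DD l g b t \<Longrightarrow> DD l (\<lambda>q. f q \<bullet> g q) (f (l t) \<bullet> b + a \<bullet> g (l t)) t"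
  unfolding DD_def by (rule bounded_bilinear.has_vector_derivative[OF bounded_bilinear_inner])

lemma pv_local: assumes "open U" "q \<in> U" "\<And>r. r \<in> U \<Longrightarrow> f r = g r" "DD (\<lambda>t. (fst q, t)) g d (snd q)"
  shows "pv f q = d"
  by (rule DD_pv, rule DD_local[OF assms(1) _ _ assms(3) assms(4)]) (auto intro!: continuous_intros simp: assms(2))
lemma pu_local: assumes "open U" "q \<in> U" "\<And>r. r \<in> U \<Longrightarrow> f r = g r" "DD (\<lambda>t. (t, snd q)) g d (fst q)"
  shows "pu f q = d"
  by (rule DD_pu, rule DD_local[OF assms(1) _ _ assms(3) assms(4)]) (auto intro!: continuous_intros simp: assms(2))
lemma DDv_local: assumes "open U" "q \<in> U" "\<And>r. r \<in> U \<Longrightarrow> f r = g r" "DD (\<lambda>t. (fst q, t)) g d (snd q)"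
  shows "DD (\<lambda>t. (fst q, t)) f d (snd q)"
  by (rule DD_local[OF assms(1) _ _ assms(3) assms(4)]) (auto intro!: continuous_intros simp: assms(2))
lemma DDu_local: assumes "open U" "q \<in> U" "\<And>r. r \<in> U \<Longrightarrow> f r = g r" "DD (\<lambda>t. (t, snd q)) g d (fst q)"
  shows "DD (\<lambda>t. (t, snd q)) f d (fst q)"
  by (rule DD_local[OF assms(1) _ _ assms(3) assms(4)]) (auto intro!: continuous_intros simp: assms(2))

definition cc :: "(real \<times> real \<Rightarrow> real^4) \<Rightarrow> real \<times> real \<Rightarrow> real" where
  "cc z q = sqrt (fE z q)"

context
  fixes U :: "(real \<times> real) set"
    and z x y n1 n2 :: "real \<times> real \<Rightarrow> real^4"
    and \<nu> \<mu> \<gamma>1 \<gamma>2 \<beta>1 \<beta>2 :: "real \<times> real \<Rightarrow> real"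
  assumes surf: "regular_surface U z"
    and frame: "geometric_frame U z x y n1 n2 \<nu> \<mu> \<gamma>1 \<gamma>2 \<beta>1 \<beta>2"
    and canon: "canonical_params U z x y \<nu> \<mu>"
begin

lemma oU: "open U" using surf unfolding regular_surface_def by simp
lemma smz: "smooth2 U z" using surf unfolding regular_surface_def by simp
lemma sms: "smooth2 U x" "smooth2 U y" "smooth2 U n1" "smooth2 U n2"
   "smooth2 U \<nu>" "smooth2 U \<mu>" "smooth2 U \<gamma>1" "smooth2 U \<gamma>2" "smooth2 U \<beta>1" "smooth2 U \<beta>2"
  using frame unfolding geometric_frame_def by auto

lemma onf:
  assumes "q \<in> U"
  shows "x q \<bullet> x q = 1" "y q \<bullet> y q = 1" "n1 q \<bullet> n1 q = 1" "n2 q \<bullet> n2 q = 1"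
    "x q \<bullet> y q = 0" "x q \<bullet> n1 q = 0" "x q \<bullet> n2 q = 0"
    "y q \<bullet> n1 q = 0" "y q \<bullet> n2 q = 0" "n1 q \<bullet> n2 q = 0"
    "y q \<bullet> x q = 0" "n1 q \<bullet> x q = 0" "n2 q \<bullet> x q = 0"
    "n1 q \<bullet> y q = 0" "n2 q \<bullet> y q = 0" "n2 q \<bullet> n1 q = 0"
  using frame assms unfolding geometric_frame_def by (auto simp: inner_commute)

lemma mn:
  assumes "q \<in> U"
  shows "\<mu> q > 0" "\<nu> q \<noteq> 0" "(\<mu> q)\<^sup>2 \<noteq> (\<nu> q)\<^sup>2"
  using frame assms unfolding geometric_frame_def by auto

lemma EG:
  assumes "q \<in> U"
  shows "fF z q = 0" "fE z q = \<bar>(\<mu> q)\<^sup>2 - (\<nu> q)\<^sup>2\<bar> powr (-1/2)" "fG z q = fE z q" "fE z q > 0"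
    "cc z q > 0" "(cc z q)\<^sup>2 = fE z q"
proof -
  show F: "fF z q = 0" using canon assms unfolding canonical_params_def semi_canonical_def by auto
  show E: "fE z q = \<bar>(\<mu> q)\<^sup>2 - (\<nu> q)\<^sup>2\<bar> powr (-1/2)" "fG z q = fE z q"
    using canon assms unfolding canonical_params_def by auto
  show E0: "fE z q > 0" using E mn[OF assms] by simp
  then show "cc z q > 0" "(cc z q)\<^sup>2 = fE z q" unfolding cc_def by auto
qed

lemma zuv:
  assumes "q \<in> U"
  shows "pu z q = cc z q *\<^sub>R x q" "pv z q = cc z q *\<^sub>R y q"
proof -
  have "x q = (1 / sqrt (fE z q)) *\<^sub>R pu z q" "y q = (1 / sqrt (fG z q)) *\<^sub>R pv z q"
    using canon assms unfolding canonical_params_def semi_canonical_def by auto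
  then show "pu z q = cc z q *\<^sub>R x q" "pv z q = cc z q *\<^sub>R y q"
    using EG[OF assms] unfolding cc_def by auto
qed

lemma tc:
  assumes "q \<in> U"
  shows "tca z q (x q) = 1 / cc z q" "tcb z q (x q) = 0" "tca z q (y q) = 0" "tcb z q (y q) = 1 / cc z q"
  using EG[OF assms] onf[OF assms] unfolding tca_def tcb_def zuv[OF assms] fE_def[symmetric]
  by (auto simp: power2_eq_square field_simps)


lemma fd:
  assumes q: "q \<in> U"
  shows "pu x q = cc z q *\<^sub>R (\<gamma>1 q *\<^sub>R y q + \<nu> q *\<^sub>R n1 q)"
    "pv x q = cc z q *\<^sub>R (- \<gamma>2 q *\<^sub>R y q + \<mu> q *\<^sub>R n2 q)"
    "pu y q = cc z q *\<^sub>R (- \<gamma>1 q *\<^sub>R x q + \<mu> q *\<^sub>R n2 q)"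
    "pv y q = cc z q *\<^sub>R (\<gamma>2 q *\<^sub>R x q - \<nu> q *\<^sub>R n1 q)"
    "pu n1 q = cc z q *\<^sub>R (- \<nu> q *\<^sub>R x q + \<beta>1 q *\<^sub>R n2 q)"
    "pv n1 q = cc z q *\<^sub>R (\<nu> q *\<^sub>R y q + \<beta>2 q *\<^sub>R n2 q)"
    "pu n2 q = cc z q *\<^sub>R (- \<mu> q *\<^sub>R y q - \<beta>1 q *\<^sub>R n1 q)"
    "pv n2 q = cc z q *\<^sub>R (- \<mu> q *\<^sub>R x q - \<beta>2 q *\<^sub>R n1 q)"
proof -
  have c0: "cc z q > 0" using EG[OF q] by simp
  have gx: "pu X q = cc z q *\<^sub>R Dflat z x X q" for X
    unfolding Dflat_def tc[OF q] using c0 by simp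
  have gy: "pv X q = cc z q *\<^sub>R Dflat z y X q" for X
    unfolding Dflat_def tc[OF q] using c0 by simp
  note F = frame[unfolded geometric_frame_def, THEN conjunct2, THEN conjunct2, THEN conjunct2, THEN conjunct2,
      THEN conjunct2, THEN conjunct2, THEN conjunct2, THEN conjunct2, THEN conjunct2, THEN conjunct2, rule_format, OF q]
  show "pu x q = cc z q *\<^sub>R (\<gamma>1 q *\<^sub>R y q + \<nu> q *\<^sub>R n1 q)"
    "pv x q = cc z q *\<^sub>R (- \<gamma>2 q *\<^sub>R y q + \<mu> q *\<^sub>R n2 q)"
    "pu y q = cc z q *\<^sub>R (- \<gamma>1 q *\<^sub>R x q + \<mu> q *\<^sub>R n2 q)"
    "pv y q = cc z q *\<^sub>R (\<gamma>2 q *\<^sub>R x q - \<nu> q *\<^sub>R n1 q)"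
    "pu n1 q = cc z q *\<^sub>R (- \<nu> q *\<^sub>R x q + \<beta>1 q *\<^sub>R n2 q)"
    "pv n1 q = cc z q *\<^sub>R (\<nu> q *\<^sub>R y q + \<beta>2 q *\<^sub>R n2 q)"
    "pu n2 q = cc z q *\<^sub>R (- \<mu> q *\<^sub>R y q - \<beta>1 q *\<^sub>R n1 q)"
    "pv n2 q = cc z q *\<^sub>R (- \<mu> q *\<^sub>R x q - \<beta>2 q *\<^sub>R n1 q)"
    unfolding gx gy using F by auto
qed

lemma ccDU: assumes q: "q \<in> U" shows "DD (\<lambda>t. (t, snd q)) (cc z) (pu (cc z) q) (fst q)"
proof -
  have e: "cc z = (\<lambda>r. sqrt (pu z r \<bullet> pu z r))" unfolding cc_def fE_def by simp
  have pos: "0 < pu z ((\<lambda>t. (t, snd q)) (fst q)) \<bullet> pu z ((\<lambda>t. (t, snd q)) (fst q))" using EG[OF q] by (simp add: fE_def)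
  from DD_sqrt[OF DD_inner2[OF smooth2_DU[OF smooth2_pu[OF smz] q] smooth2_DU[OF smooth2_pu[OF smz] q]] pos]
  have "\<exists>d. DD (\<lambda>t. (t, snd q)) (\<lambda>r. sqrt (pu z r \<bullet> pu z r)) d (fst q)" by blast
  then obtain d where "DD (\<lambda>t. (t, snd q)) (cc z) d (fst q)" unfolding e by blast
  then show ?thesis using DD_pu[of q "cc z" d] by simp
qed
lemma ccDV: assumes q: "q \<in> U" shows "DD (\<lambda>t. (fst q, t)) (cc z) (pv (cc z) q) (snd q)"
proof -
  have e: "cc z = (\<lambda>r. sqrt (pu z r \<bullet> pu z r))" unfolding cc_def fE_def by simp
  have pos: "0 < pu z ((\<lambda>t. (fst q, t)) (snd q)) \<bullet> pu z ((\<lambda>t. (fst q, t)) (snd q))" using EG[OF q] by (simp add: fE_def)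
  from DD_sqrt[OF DD_inner2[OF smooth2_DV[OF smooth2_pu[OF smz] q] smooth2_DV[OF smooth2_pu[OF smz] q]] pos]
  have "\<exists>d. DD (\<lambda>t. (fst q, t)) (\<lambda>r. sqrt (pu z r \<bullet> pu z r)) d (snd q)" by blast
  then obtain d where "DD (\<lambda>t. (fst q, t)) (cc z) d (snd q)" unfolding e by blast
  then show ?thesis using DD_pv[of q "cc z" d] by simp
qed

lemma cder:
  assumes q: "q \<in> U"
  shows "pv (cc z) q = - (cc z q)\<^sup>2 * \<gamma>1 q" "pu (cc z) q = - (cc z q)\<^sup>2 * \<gamma>2 q"
proof -
  have sw: "pv (pu z) q = pu (pv z) q" by (rule schwarz[OF oU q smz])
  have A1: "pv (pu z) q = cc z q *\<^sub>R pv x q + pv (cc z) q *\<^sub>R x q"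
    by (rule pv_local[OF oU q, where g="\<lambda>r. cc z r *\<^sub>R x r"]) (use zuv DD_scale[OF ccDV[OF q] smooth2_DV[OF sms(1) q]] in auto)
  have A2: "pu (pv z) q = cc z q *\<^sub>R pu y q + pu (cc z) q *\<^sub>R y q"
    by (rule pu_local[OF oU q, where g="\<lambda>r. cc z r *\<^sub>R y r"]) (use zuv DD_scale[OF ccDU[OF q] smooth2_DU[OF sms(2) q]] in auto)
  have "pv (pu z) q \<bullet> x q = pu (pv z) q \<bullet> x q" "pv (pu z) q \<bullet> y q = pu (pv z) q \<bullet> y q" using sw by auto
  then show "pv (cc z) q = - (cc z q)\<^sup>2 * \<gamma>1 q" "pu (cc z) q = - (cc z q)\<^sup>2 * \<gamma>2 q"
    unfolding A1 A2 fd[OF q] by (simp_all add: inner_add_left inner_diff_left onf[OF q] power2_eq_square)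
qed

end


lemma DD_eqI: "DD l f a t \<Longrightarrow> a = b \<Longrightarrow> DD l f b t" by simp

lemma DD_divide: "DD l (f::_\<Rightarrow>real) a t \<Longrightarrow> DD l g b t \<Longrightarrow> g (l t) \<noteq> 0 \<Longrightarrow>
   DD l (\<lambda>q. f q / g q) ((a * g (l t) - f (l t) * b) / (g (l t))\<^sup>2) t"
  unfolding DD_real by (drule DERIV_divide) (auto simp: power2_eq_square)

lemma half2: "2 * (X::real) / 2 = X" by simp

lemma aux_sg: "(X::real) \<noteq> 0 \<Longrightarrow> sgn X * D / \<bar>X\<bar> = D / X"
  by (cases "X > 0") (auto simp: sgn_if)
lemma aux_sq: "(X::real) \<noteq> 0 \<Longrightarrow> sgn X * D / (2 * sqrt \<bar>X\<bar>) / sqrt \<bar>X\<bar> = D / X / 2"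
proof -
  assume "X \<noteq> 0"
  have "sgn X * D / (2 * sqrt \<bar>X\<bar>) / sqrt \<bar>X\<bar> = sgn X * D / (2 * (sqrt \<bar>X\<bar> * sqrt \<bar>X\<bar>))"
    by (simp add: divide_divide_eq_left mult.assoc)
  also have "\<dots> = sgn X * D / \<bar>X\<bar> / 2" by simp
  finally show ?thesis using aux_sg[OF \<open>X \<noteq> 0\<close>] by simp
qed
lemma aux_q: "(M::real) + N \<noteq> 0 \<Longrightarrow> M - N \<noteq> 0 \<Longrightarrow>
  (((a + b) * (M - N) - (M + N) * (a - b)) / (M - N)\<^sup>2) / ((M + N) / (M - N)) = 2 * ((b * M - a * N) / (M\<^sup>2 - N\<^sup>2))"
proof -
  assume h: "M + N \<noteq> 0" "M - N \<noteq> 0"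
  have e: "M\<^sup>2 - N\<^sup>2 = (M + N) * (M - N)" by (simp add: power2_eq_square algebra_simps)
  have n: "(a + b) * (M - N) - (M + N) * (a - b) = 2 * (b * M - a * N)" by algebra
  show ?thesis unfolding e n using h by (simp add: power2_eq_square)
qed

lemma DD_lnR:
  assumes "DD l (m::_\<Rightarrow>real) a t" "DD l n b t" "(m (l t))\<^sup>2 \<noteq> (n (l t))\<^sup>2"
  shows "DD l (\<lambda>q. ln (sqrt \<bar>(m q + n q) / (m q - n q)\<bar>)) ((b * m (l t) - a * n (l t)) / ((m (l t))\<^sup>2 - (n (l t))\<^sup>2)) t"
    "DD l (\<lambda>q. ln \<bar>(m q + n q) / (m q - n q)\<bar>) (2 * ((b * m (l t) - a * n (l t)) / ((m (l t))\<^sup>2 - (n (l t))\<^sup>2))) t"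
proof -
  define M where "M = m (l t)"
  define N where "N = n (l t)"
  have MN: "M\<^sup>2 \<noteq> N\<^sup>2" using assms(3) unfolding M_def N_def .
  have p: "M + N \<noteq> 0" "M - N \<noteq> 0"
  proof -
    show "M + N \<noteq> 0"
    proof
      assume "M + N = 0" then have "M = - N" by simp
      with MN show False by simp
    qed
    show "M - N \<noteq> 0"
    proof
      assume "M - N = 0" then have "M = N" by simp
      with MN show False by simp
    qed
  qed
  have R: "(M + N) / (M - N) \<noteq> 0" using p by simp
  note D1 = DD_divide[OF DD_add[OF assms(1,2)] DD_diff[OF assms(1,2)], unfolded M_def[symmetric] N_def[symmetric], OF p(2)]
  note D2 = DD_abs[OF D1, unfolded M_def[symmetric] N_def[symmetric], OF R]
  have R2: "0 < \<bar>(M + N) / (M - N)\<bar>" using R by simp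
  note D3 = DD_sqrt[OF D2, unfolded M_def[symmetric] N_def[symmetric], OF R2]
  have R3: "0 < sqrt \<bar>(M + N) / (M - N)\<bar>" using R2 by simp
  note D4 = DD_ln[OF D3, unfolded M_def[symmetric] N_def[symmetric], OF R3]
  note D5 = DD_ln[OF D2, unfolded M_def[symmetric] N_def[symmetric], OF R2]
  show "DD l (\<lambda>q. ln (sqrt \<bar>(m q + n q) / (m q - n q)\<bar>)) ((b * m (l t) - a * n (l t)) / ((m (l t))\<^sup>2 - (n (l t))\<^sup>2)) t"
    unfolding M_def[symmetric] N_def[symmetric]
    by (rule DD_eqI[OF D4]) (simp only: aux_sq[OF R] aux_q[OF p] half2)
  show "DD l (\<lambda>q. ln \<bar>(m q + n q) / (m q - n q)\<bar>) (2 * ((b * m (l t) - a * n (l t)) / ((m (l t))\<^sup>2 - (n (l t))\<^sup>2))) t"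
    unfolding M_def[symmetric] N_def[symmetric]
    by (rule DD_eqI[OF D5]) (simp only: aux_sg[OF R] aux_q[OF p])
qed


context
  fixes U :: "(real \<times> real) set"
    and z x y n1 n2 :: "real \<times> real \<Rightarrow> real^4"
    and \<nu> \<mu> \<gamma>1 \<gamma>2 \<beta>1 \<beta>2 :: "real \<times> real \<Rightarrow> real"
  assumes surf: "regular_surface U z"
    and frame: "geometric_frame U z x y n1 n2 \<nu> \<mu> \<gamma>1 \<gamma>2 \<beta>1 \<beta>2"
    and canon: "canonical_params U z x y \<nu> \<mu>"
begin

lemmas oU' = oU[OF surf frame canon]
lemmas smz' = smz[OF surf frame canon]
lemmas sms' = sms[OF surf frame canon]
lemmas onf' = onf[OF surf frame canon]
lemmas fd' = fd[OF surf frame canon]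
lemmas cder' = cder[OF surf frame canon]
lemmas ccDU' = ccDU[OF surf frame canon]
lemmas ccDV' = ccDV[OF surf frame canon]
lemmas EG' = EG[OF surf frame canon]

lemma pv_local2: "open U \<Longrightarrow> q \<in> U \<Longrightarrow> \<forall>r\<in>U. f r = g r \<Longrightarrow> DD (\<lambda>t. (fst q, t)) g d (snd q) \<Longrightarrow> pv f q = d"
  by (rule pv_local) auto
lemma pu_local2: "open U \<Longrightarrow> q \<in> U \<Longrightarrow> \<forall>r\<in>U. f r = g r \<Longrightarrow> DD (\<lambda>t. (t, snd q)) g d (fst q) \<Longrightarrow> pu f q = d"
  by (rule pu_local) auto

lemma integ:
  assumes q: "q \<in> U"
  shows "pv \<nu> q = cc z q * (2 * \<gamma>1 q * \<nu> q - \<mu> q * \<beta>1 q)"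
    "pu \<mu> q = cc z q * (\<nu> q * \<beta>2 q + 2 * \<gamma>2 q * \<mu> q)"
    "pv (cc z) q * \<gamma>1 q + cc z q * pv \<gamma>1 q + (pu (cc z) q * \<gamma>2 q + cc z q * pu \<gamma>2 q) = - (cc z q)\<^sup>2 * ((\<nu> q)\<^sup>2 + (\<mu> q)\<^sup>2)"
    "pu \<nu> q = cc z q * (\<mu> q * \<beta>2 q + 2 * \<gamma>2 q * \<nu> q)"
    "pv \<mu> q = cc z q * (2 * \<gamma>1 q * \<mu> q - \<nu> q * \<beta>1 q)"
    "pu (cc z) q * \<beta>2 q + cc z q * pu \<beta>2 q - (pv (cc z) q * \<beta>1 q + cc z q * pv \<beta>1 q) = - 2 * (cc z q)\<^sup>2 * \<nu> q * \<mu> q"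
proof -
  note sv = smooth2_DV[OF _ q] and su = smooth2_DU[OF _ q]
  have P1: "\<forall>r\<in>U. pu x r = cc z r *\<^sub>R (\<gamma>1 r *\<^sub>R y r + \<nu> r *\<^sub>R n1 r)" using fd'(1) by blast
  note L1 = pv_local2[OF oU' q P1 DD_scale[OF ccDV'[OF q] DD_add[OF DD_scale[OF sv[OF sms'(7)] sv[OF sms'(2)]]
      DD_scale[OF sv[OF sms'(5)] sv[OF sms'(3)]]]]]
  have P2: "\<forall>r\<in>U. pv x r = cc z r *\<^sub>R (- \<gamma>2 r *\<^sub>R y r + \<mu> r *\<^sub>R n2 r)" using fd'(2) by blast
  note L2 = pu_local2[OF oU' q P2 DD_scale[OF ccDU'[OF q] DD_add[OF DD_scale[OF DD_minus[OF su[OF sms'(8)]] su[OF sms'(2)]]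
      DD_scale[OF su[OF sms'(6)] su[OF sms'(4)]]]]]
  have P3: "\<forall>r\<in>U. pu y r = cc z r *\<^sub>R (- \<gamma>1 r *\<^sub>R x r + \<mu> r *\<^sub>R n2 r)" using fd'(3) by blast
  note L3 = pv_local2[OF oU' q P3 DD_scale[OF ccDV'[OF q] DD_add[OF DD_scale[OF DD_minus[OF sv[OF sms'(7)]] sv[OF sms'(1)]]
      DD_scale[OF sv[OF sms'(6)] sv[OF sms'(4)]]]]]
  have P4: "\<forall>r\<in>U. pv y r = cc z r *\<^sub>R (\<gamma>2 r *\<^sub>R x r - \<nu> r *\<^sub>R n1 r)" using fd'(4) by blast
  note L4 = pu_local2[OF oU' q P4 DD_scale[OF ccDU'[OF q] DD_diff[OF DD_scale[OF su[OF sms'(8)] su[OF sms'(1)]]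
      DD_scale[OF su[OF sms'(5)] su[OF sms'(3)]]]]]
  have P5: "\<forall>r\<in>U. pu n1 r = cc z r *\<^sub>R (- \<nu> r *\<^sub>R x r + \<beta>1 r *\<^sub>R n2 r)" using fd'(5) by blast
  note L5 = pv_local2[OF oU' q P5 DD_scale[OF ccDV'[OF q] DD_add[OF DD_scale[OF DD_minus[OF sv[OF sms'(5)]] sv[OF sms'(1)]]
      DD_scale[OF sv[OF sms'(9)] sv[OF sms'(4)]]]]]
  have P6: "\<forall>r\<in>U. pv n1 r = cc z r *\<^sub>R (\<nu> r *\<^sub>R y r + \<beta>2 r *\<^sub>R n2 r)" using fd'(6) by blast
  note L6 = pu_local2[OF oU' q P6 DD_scale[OF ccDU'[OF q] DD_add[OF DD_scale[OF su[OF sms'(5)] su[OF sms'(2)]]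
      DD_scale[OF su[OF sms'(10)] su[OF sms'(4)]]]]]
  have swx: "pv (pu x) q = pu (pv x) q" by (rule schwarz[OF oU' q sms'(1)])
  have swy: "pv (pu y) q = pu (pv y) q" by (rule schwarz[OF oU' q sms'(2)])
  have swn: "pv (pu n1) q = pu (pv n1) q" by (rule schwarz[OF oU' q sms'(3)])
  note SS = fd'[OF q] cder'[OF q] inner_add_left inner_diff_left onf'[OF q] power2_eq_square
  have "pv (pu x) q \<bullet> n1 q = pu (pv x) q \<bullet> n1 q" "pv (pu x) q \<bullet> n2 q = pu (pv x) q \<bullet> n2 q"
    "pv (pu x) q \<bullet> y q = pu (pv x) q \<bullet> y q" "pv (pu y) q \<bullet> n1 q = pu (pv y) q \<bullet> n1 q"
    "pv (pu y) q \<bullet> n2 q = pu (pv y) q \<bullet> n2 q" "pv (pu n1) q \<bullet> n2 q = pu (pv n1) q \<bullet> n2 q"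
    using swx swy swn by simp_all
  then have H: "cc z q * (pv \<nu> q - \<gamma>1 q * cc z q * \<nu> q) - cc z q * cc z q * \<gamma>1 q * \<nu> q = - (cc z q * (\<mu> q * cc z q * \<beta>1 q))"
    "cc z q * (\<nu> q * cc z q * \<beta>2 q) = cc z q * (pu \<mu> q - \<gamma>2 q * cc z q * \<mu> q) - cc z q * cc z q * \<gamma>2 q * \<mu> q"
    "cc z q * (pv \<gamma>1 q + \<nu> q * cc z q * \<nu> q) - cc z q * cc z q * \<gamma>1 q * \<gamma>1 q = cc z q * (- pu \<gamma>2 q - \<mu> q * cc z q * \<mu> q) + cc z q * cc z q * \<gamma>2 q * \<gamma>2 q"
    "- (cc z q * (\<mu> q * cc z q * \<beta>2 q)) = cc z q * (\<gamma>2 q * cc z q * \<nu> q - pu \<nu> q) + cc z q * cc z q * \<gamma>2 q * \<nu> q"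
    "cc z q * (pv \<mu> q - \<gamma>1 q * cc z q * \<mu> q) - cc z q * cc z q * \<gamma>1 q * \<mu> q = - (cc z q * (\<nu> q * cc z q * \<beta>1 q))"
    "cc z q * (pv \<beta>1 q - \<nu> q * cc z q * \<mu> q) - cc z q * cc z q * \<gamma>1 q * \<beta>1 q = cc z q * (\<nu> q * cc z q * \<mu> q + pu \<beta>2 q) - cc z q * cc z q * \<gamma>2 q * \<beta>2 q"
    unfolding L1 L2 L3 L4 L5 L6 by (simp_all add: SS)
  have c0: "cc z q \<noteq> 0" using EG'(5)[OF q] by simp
  have cd: "pv (cc z) q = - (cc z q)\<^sup>2 * \<gamma>1 q" "pu (cc z) q = - (cc z q)\<^sup>2 * \<gamma>2 q" using cder'[OF q] by auto
  have "cc z q * (pv \<nu> q - cc z q * (2 * \<gamma>1 q * \<nu> q - \<mu> q * \<beta>1 q)) = 0" using H(1) by algebra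
  then show "pv \<nu> q = cc z q * (2 * \<gamma>1 q * \<nu> q - \<mu> q * \<beta>1 q)" using c0 by simp
  have "cc z q * (pu \<mu> q - cc z q * (\<nu> q * \<beta>2 q + 2 * \<gamma>2 q * \<mu> q)) = 0" using H(2) by algebra
  then show "pu \<mu> q = cc z q * (\<nu> q * \<beta>2 q + 2 * \<gamma>2 q * \<mu> q)" using c0 by simp
  show "pv (cc z) q * \<gamma>1 q + cc z q * pv \<gamma>1 q + (pu (cc z) q * \<gamma>2 q + cc z q * pu \<gamma>2 q) = - (cc z q)\<^sup>2 * ((\<nu> q)\<^sup>2 + (\<mu> q)\<^sup>2)" unfolding cd using H(3) by algebra
  have "cc z q * (pu \<nu> q - cc z q * (\<mu> q * \<beta>2 q + 2 * \<gamma>2 q * \<nu> q)) = 0" using H(4) by algebra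
  then show "pu \<nu> q = cc z q * (\<mu> q * \<beta>2 q + 2 * \<gamma>2 q * \<nu> q)" using c0 by simp
  have "cc z q * (pv \<mu> q - cc z q * (2 * \<gamma>1 q * \<mu> q - \<nu> q * \<beta>1 q)) = 0" using H(5) by algebra
  then show "pv \<mu> q = cc z q * (2 * \<gamma>1 q * \<mu> q - \<nu> q * \<beta>1 q)" using c0 by simp
  show "pu (cc z) q * \<beta>2 q + cc z q * pu \<beta>2 q - (pv (cc z) q * \<beta>1 q + cc z q * pv \<beta>1 q) = - 2 * (cc z q)\<^sup>2 * \<nu> q * \<mu> q" unfolding cd using H(6) by algebra
qed

lemmas integ' = integ
lemmas pu_local2' = pu_local2
lemmas pv_local2' = pv_local2
lemmas mn' = mn[OF surf frame canon]
lemma nproj_eq: assumes q: "q \<in> U" shows "nproj z q w = w - (w \<bullet> x q) *\<^sub>R x q - (w \<bullet> y q) *\<^sub>R y q"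
proof -
  have c0: "cc z q \<noteq> 0" using EG'(5)[OF q] by simp
  have E: "fE z q = (cc z q)\<^sup>2" "fG z q = (cc z q)\<^sup>2" "fF z q = 0" using EG'[OF q] by auto
  show ?thesis unfolding nproj_def tproj_def tca_def tcb_def E zuv[OF surf frame canon q]
    using c0 by (simp add: power2_eq_square)
qed

lemma gauss_eq: assumes q: "q \<in> U" shows "gauss_curv z q = - ((\<nu> q)\<^sup>2 + (\<mu> q)\<^sup>2)"
proof -
  note sv = smooth2_DV[OF _ q] and su = smooth2_DU[OF _ q]
  have c0: "cc z q \<noteq> 0" using EG'(5)[OF q] by simp
  have E: "fE z q = (cc z q)\<^sup>2" "fG z q = (cc z q)\<^sup>2" "fF z q = 0" using EG'[OF q] by auto
  have Pu: "\<forall>r\<in>U. pu z r = cc z r *\<^sub>R x r" and Pv: "\<forall>r\<in>U. pv z r = cc z r *\<^sub>R y r"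
    using zuv[OF surf frame canon] by auto
  note L1 = pu_local2'[OF oU' q Pu DD_scale[OF ccDU'[OF q] su[OF sms'(1)]]]
  note L2 = pv_local2'[OF oU' q Pv DD_scale[OF ccDV'[OF q] sv[OF sms'(2)]]]
  note L3 = pu_local2'[OF oU' q Pv DD_scale[OF ccDU'[OF q] su[OF sms'(2)]]]
  show ?thesis unfolding gauss_curv_def E L1 L2 L3 nproj_eq[OF q]
    using c0 by (simp add: fd'[OF q] inner_add_left inner_diff_left inner_add_right inner_diff_right onf'[OF q] power2_eq_square cder'[OF q] field_simps)
qed


lemma normal_eq: assumes q: "q \<in> U" shows "normal_curv z n1 n2 q = 2 * \<nu> q * \<mu> q"
proof -
  note sv = smooth2_DV[OF _ q] and su = smooth2_DU[OF _ q]
  have c0: "cc z q > 0" using EG'(5)[OF q] by simp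
  have E: "fE z q = (cc z q)\<^sup>2" "fG z q = (cc z q)\<^sup>2" "fF z q = 0" using EG'[OF q] by auto
  have sq: "sqrt (fE z q * fG z q - (fF z q)\<^sup>2) = (cc z q)\<^sup>2" unfolding E
    by (simp add: power2_eq_square real_sqrt_mult)
  have Dv: "\<forall>r\<in>U. Dnv z n2 r = (- (cc z r * \<beta>2 r)) *\<^sub>R n1 r"
    by (auto simp: Dnv_def nproj_eq fd' inner_add_left inner_diff_left inner_add_right inner_diff_right onf' algebra_simps)
  have Du: "\<forall>r\<in>U. Dnu z n2 r = (- (cc z r * \<beta>1 r)) *\<^sub>R n1 r"
    by (auto simp: Dnu_def nproj_eq fd' inner_add_left inner_diff_left inner_add_right inner_diff_right onf' algebra_simps)
  note L1 = pu_local2'[OF oU' q Dv DD_scale[OF DD_minus[OF DD_mult[OF ccDU'[OF q] su[OF sms'(10)]]] su[OF sms'(3)]]]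
  note L2 = pv_local2'[OF oU' q Du DD_scale[OF DD_minus[OF DD_mult[OF ccDV'[OF q] sv[OF sms'(9)]]] sv[OF sms'(3)]]]
  have R: "pu (cc z) q * \<beta>2 q + cc z q * pu \<beta>2 q - (pv (cc z) q * \<beta>1 q + cc z q * pv \<beta>1 q) = - 2 * (cc z q)\<^sup>2 * \<nu> q * \<mu> q"
    using integ'(6)[OF q] .
  have "(Dnu z (Dnv z n2) q - Dnv z (Dnu z n2) q) \<bullet> n1 q = 2 * (cc z q)\<^sup>2 * \<nu> q * \<mu> q"
    unfolding Dnu_def[of z "Dnv z n2" q] Dnv_def[of z "Dnu z n2" q] L1 L2 nproj_eq[OF q]
    using R by (simp add: fd'[OF q] inner_add_left inner_diff_left inner_add_right inner_diff_right onf'[OF q] algebra_simps)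
  then show ?thesis unfolding normal_curv_def sq using c0 by simp
qed

lemmas gauss_eq' = gauss_eq
lemmas normal_eq' = normal_eq
lemma Wf:
  assumes q: "q \<in> U"
  shows "\<bar>(\<mu> q)\<^sup>2 - (\<nu> q)\<^sup>2\<bar> > 0"
    "cc z q = \<bar>(\<mu> q)\<^sup>2 - (\<nu> q)\<^sup>2\<bar> powr (-1/4)"
    "\<bar>(\<mu> q)\<^sup>2 - (\<nu> q)\<^sup>2\<bar> powr (1/4) = 1 / cc z q"
    "sqrt \<bar>(\<mu> q)\<^sup>2 - (\<nu> q)\<^sup>2\<bar> * (cc z q)\<^sup>2 = 1"
    "ln \<bar>(\<mu> q)\<^sup>2 - (\<nu> q)\<^sup>2\<bar> = -4 * ln (cc z q)"
proof -
  define W where "W = \<bar>(\<mu> q)\<^sup>2 - (\<nu> q)\<^sup>2\<bar>"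
  show W0: "\<bar>(\<mu> q)\<^sup>2 - (\<nu> q)\<^sup>2\<bar> > 0" using mn'(3)[OF q] by simp
  have E: "fE z q = W powr (-1/2)" using EG'(2)[OF q] unfolding W_def .
  have c: "cc z q = W powr (-1/4)"
    unfolding cc_def E using W0 by (simp add: powr_half_sqrt[symmetric] powr_powr W_def)
  then show "cc z q = \<bar>(\<mu> q)\<^sup>2 - (\<nu> q)\<^sup>2\<bar> powr (-1/4)" unfolding W_def .
  show "\<bar>(\<mu> q)\<^sup>2 - (\<nu> q)\<^sup>2\<bar> powr (1/4) = 1 / cc z q"
    unfolding W_def[symmetric] c using powr_minus_divide[of W "1/4"] W0 by (simp add: W_def)
  have "sqrt W * (cc z q)\<^sup>2 = W powr (1/2) * fE z q" using EG'(6)[OF q] W0 by (simp add: powr_half_sqrt W_def)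
  also have "\<dots> = 1" unfolding E powr_add[symmetric] using W0 by (simp add: W_def)
  finally show "sqrt \<bar>(\<mu> q)\<^sup>2 - (\<nu> q)\<^sup>2\<bar> * (cc z q)\<^sup>2 = 1" unfolding W_def .
  show "ln \<bar>(\<mu> q)\<^sup>2 - (\<nu> q)\<^sup>2\<bar> = -4 * ln (cc z q)" unfolding W_def[symmetric] c by simp
qed

lemma LW_D:
  assumes q: "q \<in> U"
  shows "DD (\<lambda>t. (t, snd q)) (\<lambda>q. ln \<bar>(\<mu> q)\<^sup>2 - (\<nu> q)\<^sup>2\<bar>) (4 * (cc z q * \<gamma>2 q)) (fst q)"
    "DD (\<lambda>t. (fst q, t)) (\<lambda>q. ln \<bar>(\<mu> q)\<^sup>2 - (\<nu> q)\<^sup>2\<bar>) (4 * (cc z q * \<gamma>1 q)) (snd q)"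
proof -
  have P: "\<And>r. r \<in> U \<Longrightarrow> ln \<bar>(\<mu> r)\<^sup>2 - (\<nu> r)\<^sup>2\<bar> = -4 * ln (cc z r)" using Wf(5) by blast
  have c0: "cc z (fst q, snd q) > 0" using EG'(5)[OF q] by simp
  have c1: "cc z q \<noteq> 0" using EG'(5)[OF q] by simp
  have vu: "-4 * (pu (cc z) q / cc z (fst q, snd q)) + 0 * ln (cc z (fst q, snd q)) = 4 * (cc z q * \<gamma>2 q)"
    using c1 by (simp add: cder'[OF q] power2_eq_square)
  have vv: "-4 * (pv (cc z) q / cc z (fst q, snd q)) + 0 * ln (cc z (fst q, snd q)) = 4 * (cc z q * \<gamma>1 q)"
    using c1 by (simp add: cder'[OF q] power2_eq_square)
  show "DD (\<lambda>t. (t, snd q)) (\<lambda>q. ln \<bar>(\<mu> q)\<^sup>2 - (\<nu> q)\<^sup>2\<bar>) (4 * (cc z q * \<gamma>2 q)) (fst q)"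
    by (rule DDu_local[OF oU' q P DD_eqI[OF DD_mult[OF DD_const DD_ln[OF ccDU'[OF q] c0]] vu]])
  show "DD (\<lambda>t. (fst q, t)) (\<lambda>q. ln \<bar>(\<mu> q)\<^sup>2 - (\<nu> q)\<^sup>2\<bar>) (4 * (cc z q * \<gamma>1 q)) (snd q)"
    by (rule DDv_local[OF oU' q P DD_eqI[OF DD_mult[OF DD_const DD_ln[OF ccDV'[OF q] c0]] vv]])
qed

lemma LR_D:
  assumes q: "q \<in> U"
  shows "DD (\<lambda>t. (t, snd q)) (\<lambda>q. ln \<bar>(\<mu> q + \<nu> q) / (\<mu> q - \<nu> q)\<bar>) (2 * (cc z q * \<beta>2 q)) (fst q)"
    "DD (\<lambda>t. (fst q, t)) (\<lambda>q. ln \<bar>(\<mu> q + \<nu> q) / (\<mu> q - \<nu> q)\<bar>) (- 2 * (cc z q * \<beta>1 q)) (snd q)"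
    "DD (\<lambda>t. (t, snd q)) (\<lambda>q. ln (sqrt \<bar>(\<mu> q + \<nu> q) / (\<mu> q - \<nu> q)\<bar>)) (cc z q * \<beta>2 q) (fst q)"
    "DD (\<lambda>t. (fst q, t)) (\<lambda>q. ln (sqrt \<bar>(\<mu> q + \<nu> q) / (\<mu> q - \<nu> q)\<bar>)) (- (cc z q * \<beta>1 q)) (snd q)"
proof -
  have m: "(\<mu> (fst q, snd q))\<^sup>2 \<noteq> (\<nu> (fst q, snd q))\<^sup>2" using mn'(3)[OF q] by simp
  have m2: "(\<mu> q)\<^sup>2 - (\<nu> q)\<^sup>2 \<noteq> 0" using mn'(3)[OF q] by simp
  note I = integ'[OF q]
  have eu: "(pu \<nu> q * \<mu> q - pu \<mu> q * \<nu> q) / ((\<mu> q)\<^sup>2 - (\<nu> q)\<^sup>2) = cc z q * \<beta>2 q"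
  proof -
    have "pu \<nu> q * \<mu> q - pu \<mu> q * \<nu> q = cc z q * \<beta>2 q * ((\<mu> q)\<^sup>2 - (\<nu> q)\<^sup>2)"
      unfolding I(2) I(4) by (simp add: power2_eq_square algebra_simps)
    then show ?thesis using m2 by simp
  qed
  have ev: "(pv \<nu> q * \<mu> q - pv \<mu> q * \<nu> q) / ((\<mu> q)\<^sup>2 - (\<nu> q)\<^sup>2) = - (cc z q * \<beta>1 q)"
  proof -
    have "pv \<nu> q * \<mu> q - pv \<mu> q * \<nu> q = - (cc z q * \<beta>1 q) * ((\<mu> q)\<^sup>2 - (\<nu> q)\<^sup>2)"
      unfolding I(1) I(5) by (simp add: power2_eq_square algebra_simps)
    then show ?thesis using m2 by simp
  qed
  note su = smooth2_DU[OF _ q] and sv = smooth2_DV[OF _ q]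
  note A = DD_lnR[OF su[OF sms'(6)] su[OF sms'(5)] m]
  note B = DD_lnR[OF sv[OF sms'(6)] sv[OF sms'(5)] m]
  show "DD (\<lambda>t. (t, snd q)) (\<lambda>q. ln \<bar>(\<mu> q + \<nu> q) / (\<mu> q - \<nu> q)\<bar>) (2 * (cc z q * \<beta>2 q)) (fst q)"
    using A(2) eu by simp
  show "DD (\<lambda>t. (fst q, t)) (\<lambda>q. ln \<bar>(\<mu> q + \<nu> q) / (\<mu> q - \<nu> q)\<bar>) (- 2 * (cc z q * \<beta>1 q)) (snd q)"
    using B(2) ev by simp
  show "DD (\<lambda>t. (t, snd q)) (\<lambda>q. ln (sqrt \<bar>(\<mu> q + \<nu> q) / (\<mu> q - \<nu> q)\<bar>)) (cc z q * \<beta>2 q) (fst q)"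
    using A(1) eu by simp
  show "DD (\<lambda>t. (fst q, t)) (\<lambda>q. ln (sqrt \<bar>(\<mu> q + \<nu> q) / (\<mu> q - \<nu> q)\<bar>)) (- (cc z q * \<beta>1 q)) (snd q)"
    using B(1) ev by simp
qed

lemma second_u: assumes p: "p \<in> U" and h: "smooth2 U h" and f: "\<forall>r\<in>U. pu f r = k * (cc z r * h r)"
  shows "pu (pu f) p = k * (cc z p * pu h p + pu (cc z) p * h p)"
  using pu_local2'[OF oU' p f DD_mult[OF DD_const DD_mult[OF ccDU'[OF p] smooth2_DU[OF h p]]]] by simp
lemma second_v: assumes p: "p \<in> U" and h: "smooth2 U h" and f: "\<forall>r\<in>U. pv f r = k * (cc z r * h r)"
  shows "pv (pv f) p = k * (cc z p * pv h p + pv (cc z) p * h p)"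
  using pv_local2'[OF oU' p f DD_mult[OF DD_const DD_mult[OF ccDV'[OF p] smooth2_DV[OF h p]]]] by simp


lemma final:
  assumes p: "p \<in> U"
  shows "\<gamma>1 p = pv (\<lambda>q. \<bar>(\<mu> q)\<^sup>2 - (\<nu> q)\<^sup>2\<bar> powr (1/4)) p \<and>
     \<gamma>2 p = pu (\<lambda>q. \<bar>(\<mu> q)\<^sup>2 - (\<nu> q)\<^sup>2\<bar> powr (1/4)) p \<and>
     \<beta>1 p = - (\<bar>(\<mu> p)\<^sup>2 - (\<nu> p)\<^sup>2\<bar> powr (1/4)) *
              pv (\<lambda>q. ln (sqrt \<bar>(\<mu> q + \<nu> q) / (\<mu> q - \<nu> q)\<bar>)) p \<and>
     \<beta>2 p = \<bar>(\<mu> p)\<^sup>2 - (\<nu> p)\<^sup>2\<bar> powr (1/4) *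
              pu (\<lambda>q. ln (sqrt \<bar>(\<mu> q + \<nu> q) / (\<mu> q - \<nu> q)\<bar>)) p \<and>
     1/4 * sqrt \<bar>(\<mu> p)\<^sup>2 - (\<nu> p)\<^sup>2\<bar> * lap (\<lambda>q. ln \<bar>(\<mu> q)\<^sup>2 - (\<nu> q)\<^sup>2\<bar>) p
        + (\<nu> p)\<^sup>2 + (\<mu> p)\<^sup>2 = 0 \<and>
     1/2 * sqrt \<bar>(\<mu> p)\<^sup>2 - (\<nu> p)\<^sup>2\<bar> * lap (\<lambda>q. ln \<bar>(\<mu> q + \<nu> q) / (\<mu> q - \<nu> q)\<bar>) p
        + 2 * \<nu> p * \<mu> p = 0 \<and>
     1/8 * ((gauss_curv z p)\<^sup>2 - (normal_curv z n1 n2 p)\<^sup>2) powr (1/4)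
        * lap (\<lambda>q. ln ((gauss_curv z q)\<^sup>2 - (normal_curv z n1 n2 q)\<^sup>2)) p
        - gauss_curv z p = 0 \<and>
     1/4 * ((gauss_curv z p)\<^sup>2 - (normal_curv z n1 n2 p)\<^sup>2) powr (1/4)
        * lap (\<lambda>q. ln ((gauss_curv z q - normal_curv z n1 n2 q) / (gauss_curv z q + normal_curv z n1 n2 q))) p
        + normal_curv z n1 n2 p = 0"
proof (intro conjI)
  note I = integ'[OF p]
  have c1: "cc z p \<noteq> 0" and c0: "cc z p > 0" using EG'(5)[OF p] by auto
  have c0': "cc z (fst p, snd p) \<noteq> 0" using c1 by simp
  have P4: "\<forall>r\<in>U. \<bar>(\<mu> r)\<^sup>2 - (\<nu> r)\<^sup>2\<bar> powr (1/4) = 1 / cc z r" using Wf(3) by blast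
  show "\<gamma>1 p = pv (\<lambda>q. \<bar>(\<mu> q)\<^sup>2 - (\<nu> q)\<^sup>2\<bar> powr (1/4)) p"
    using pv_local2'[OF oU' p P4 DD_inverse[OF ccDV'[OF p] c0']] c1 by (simp add: cder'[OF p])
  show "\<gamma>2 p = pu (\<lambda>q. \<bar>(\<mu> q)\<^sup>2 - (\<nu> q)\<^sup>2\<bar> powr (1/4)) p"
    using pu_local2'[OF oU' p P4 DD_inverse[OF ccDU'[OF p] c0']] c1 by (simp add: cder'[OF p])
  show "\<beta>1 p = - (\<bar>(\<mu> p)\<^sup>2 - (\<nu> p)\<^sup>2\<bar> powr (1/4)) *
              pv (\<lambda>q. ln (sqrt \<bar>(\<mu> q + \<nu> q) / (\<mu> q - \<nu> q)\<bar>)) p"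
    unfolding Wf(3)[OF p] DD_pv[OF LR_D(4)[OF p]] using c1 by simp
  show "\<beta>2 p = \<bar>(\<mu> p)\<^sup>2 - (\<nu> p)\<^sup>2\<bar> powr (1/4) *
              pu (\<lambda>q. ln (sqrt \<bar>(\<mu> q + \<nu> q) / (\<mu> q - \<nu> q)\<bar>)) p"
    unfolding Wf(3)[OF p] DD_pu[OF LR_D(3)[OF p]] using c1 by simp
  have sw: "sqrt \<bar>(\<mu> p)\<^sup>2 - (\<nu> p)\<^sup>2\<bar> * (cc z p)\<^sup>2 = 1" using Wf(4)[OF p] .
  have LWu: "\<forall>r\<in>U. pu (\<lambda>q. ln \<bar>(\<mu> q)\<^sup>2 - (\<nu> q)\<^sup>2\<bar>) r = 4 * (cc z r * \<gamma>2 r)"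
    using LW_D(1) DD_pu by blast
  have LWv: "\<forall>r\<in>U. pv (\<lambda>q. ln \<bar>(\<mu> q)\<^sup>2 - (\<nu> q)\<^sup>2\<bar>) r = 4 * (cc z r * \<gamma>1 r)"
    using LW_D(2) DD_pv by blast
  have lapW: "lap (\<lambda>q. ln \<bar>(\<mu> q)\<^sup>2 - (\<nu> q)\<^sup>2\<bar>) p = 4 * (- (cc z p)\<^sup>2 * ((\<nu> p)\<^sup>2 + (\<mu> p)\<^sup>2))"
    unfolding lap_def second_u[OF p sms'(8) LWu] second_v[OF p sms'(7) LWv] using I(3) by algebra
  show "1/4 * sqrt \<bar>(\<mu> p)\<^sup>2 - (\<nu> p)\<^sup>2\<bar> * lap (\<lambda>q. ln \<bar>(\<mu> q)\<^sup>2 - (\<nu> q)\<^sup>2\<bar>) p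
        + (\<nu> p)\<^sup>2 + (\<mu> p)\<^sup>2 = 0"
    unfolding lapW using sw by algebra
  have LRu: "\<forall>r\<in>U. pu (\<lambda>q. ln \<bar>(\<mu> q + \<nu> q) / (\<mu> q - \<nu> q)\<bar>) r = 2 * (cc z r * \<beta>2 r)"
    using LR_D(1) DD_pu by blast
  have LRv: "\<forall>r\<in>U. pv (\<lambda>q. ln \<bar>(\<mu> q + \<nu> q) / (\<mu> q - \<nu> q)\<bar>) r = - 2 * (cc z r * \<beta>1 r)"
    using LR_D(2) DD_pv by blast
  have lapR: "lap (\<lambda>q. ln \<bar>(\<mu> q + \<nu> q) / (\<mu> q - \<nu> q)\<bar>) p = 2 * (- 2 * (cc z p)\<^sup>2 * \<nu> p * \<mu> p)"
    unfolding lap_def second_u[OF p sms'(10) LRu] second_v[OF p sms'(9) LRv] using I(6) by algebra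
  show "1/2 * sqrt \<bar>(\<mu> p)\<^sup>2 - (\<nu> p)\<^sup>2\<bar> * lap (\<lambda>q. ln \<bar>(\<mu> q + \<nu> q) / (\<mu> q - \<nu> q)\<bar>) p
        + 2 * \<nu> p * \<mu> p = 0"
    unfolding lapR using sw by algebra
  have KK: "(gauss_curv z r)\<^sup>2 - (normal_curv z n1 n2 r)\<^sup>2 = \<bar>(\<mu> r)\<^sup>2 - (\<nu> r)\<^sup>2\<bar> ^ 2" if r: "r \<in> U" for r
  proof -
    have "(gauss_curv z r)\<^sup>2 - (normal_curv z n1 n2 r)\<^sup>2 = ((\<mu> r)\<^sup>2 - (\<nu> r)\<^sup>2)\<^sup>2"
      unfolding gauss_eq'[OF r] normal_eq'[OF r] by algebra
    then show ?thesis by simp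
  qed
  have KLf: "\<forall>r\<in>U. ln ((gauss_curv z r)\<^sup>2 - (normal_curv z n1 n2 r)\<^sup>2) = 2 * ln \<bar>(\<mu> r)\<^sup>2 - (\<nu> r)\<^sup>2\<bar>"
  proof (intro ballI)
    fix r assume r: "r \<in> U"
    show "ln ((gauss_curv z r)\<^sup>2 - (normal_curv z n1 n2 r)\<^sup>2) = 2 * ln \<bar>(\<mu> r)\<^sup>2 - (\<nu> r)\<^sup>2\<bar>"
      unfolding KK[OF r] ln_realpow by simp
  qed
  have KLu: "\<forall>r\<in>U. pu (\<lambda>q. ln ((gauss_curv z q)\<^sup>2 - (normal_curv z n1 n2 q)\<^sup>2)) r = 8 * (cc z r * \<gamma>2 r)"
  proof (intro ballI)
    fix r assume r: "r \<in> U"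
    show "pu (\<lambda>q. ln ((gauss_curv z q)\<^sup>2 - (normal_curv z n1 n2 q)\<^sup>2)) r = 8 * (cc z r * \<gamma>2 r)"
      using pu_local2'[OF oU' r KLf DD_mult[OF DD_const LW_D(1)[OF r]]] by simp
  qed
  have KLv: "\<forall>r\<in>U. pv (\<lambda>q. ln ((gauss_curv z q)\<^sup>2 - (normal_curv z n1 n2 q)\<^sup>2)) r = 8 * (cc z r * \<gamma>1 r)"
  proof (intro ballI)
    fix r assume r: "r \<in> U"
    show "pv (\<lambda>q. ln ((gauss_curv z q)\<^sup>2 - (normal_curv z n1 n2 q)\<^sup>2)) r = 8 * (cc z r * \<gamma>1 r)"
      using pv_local2'[OF oU' r KLf DD_mult[OF DD_const LW_D(2)[OF r]]] by simp
  qed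
  have lapK: "lap (\<lambda>q. ln ((gauss_curv z q)\<^sup>2 - (normal_curv z n1 n2 q)\<^sup>2)) p = 8 * (- (cc z p)\<^sup>2 * ((\<nu> p)\<^sup>2 + (\<mu> p)\<^sup>2))"
    unfolding lap_def second_u[OF p sms'(8) KLu] second_v[OF p sms'(7) KLv] using I(3) by algebra
  have W0: "\<bar>(\<mu> p)\<^sup>2 - (\<nu> p)\<^sup>2\<bar> > 0" using Wf(1)[OF p] .
  have pw: "((gauss_curv z p)\<^sup>2 - (normal_curv z n1 n2 p)\<^sup>2) powr (1/4) = sqrt \<bar>(\<mu> p)\<^sup>2 - (\<nu> p)\<^sup>2\<bar>"
  proof -
    define W where "W = \<bar>(\<mu> p)\<^sup>2 - (\<nu> p)\<^sup>2\<bar>"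
    have W0': "W > 0" using W0 unfolding W_def .
    have "W ^ 2 = W powr 2" using powr_realpow[OF W0', of 2] by simp
    then have "(W ^ 2) powr (1/4) = W powr (1/2)" by (simp add: powr_powr)
    then show ?thesis unfolding KK[OF p] W_def[symmetric] using W0' by (simp add: powr_half_sqrt)
  qed
  show "1/8 * ((gauss_curv z p)\<^sup>2 - (normal_curv z n1 n2 p)\<^sup>2) powr (1/4)
        * lap (\<lambda>q. ln ((gauss_curv z q)\<^sup>2 - (normal_curv z n1 n2 q)\<^sup>2)) p
        - gauss_curv z p = 0"
    unfolding pw unfolding lapK gauss_eq'[OF p] using sw by algebra
  have KR: "(gauss_curv z r - normal_curv z n1 n2 r) / (gauss_curv z r + normal_curv z n1 n2 r)
      = \<bar>(\<mu> r + \<nu> r) / (\<mu> r - \<nu> r)\<bar> ^ 2" if r: "r \<in> U" for r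
  proof -
    have a: "gauss_curv z r - normal_curv z n1 n2 r = - ((\<mu> r + \<nu> r)\<^sup>2)"
      "gauss_curv z r + normal_curv z n1 n2 r = - ((\<mu> r - \<nu> r)\<^sup>2)"
      unfolding gauss_eq'[OF r] normal_eq'[OF r] by algebra+
    show ?thesis unfolding a by (simp add: power_divide)
  qed
  have KRf: "\<forall>r\<in>U. ln ((gauss_curv z r - normal_curv z n1 n2 r) / (gauss_curv z r + normal_curv z n1 n2 r))
      = 2 * ln \<bar>(\<mu> r + \<nu> r) / (\<mu> r - \<nu> r)\<bar>"
  proof (intro ballI)
    fix r assume r: "r \<in> U"
    show "ln ((gauss_curv z r - normal_curv z n1 n2 r) / (gauss_curv z r + normal_curv z n1 n2 r))
      = 2 * ln \<bar>(\<mu> r + \<nu> r) / (\<mu> r - \<nu> r)\<bar>"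
      unfolding KR[OF r] ln_realpow by simp
  qed
  have KRu: "\<forall>r\<in>U. pu (\<lambda>q. ln ((gauss_curv z q - normal_curv z n1 n2 q) / (gauss_curv z q + normal_curv z n1 n2 q))) r
     = 4 * (cc z r * \<beta>2 r)"
  proof (intro ballI)
    fix r assume r: "r \<in> U"
    show "pu (\<lambda>q. ln ((gauss_curv z q - normal_curv z n1 n2 q) / (gauss_curv z q + normal_curv z n1 n2 q))) r
     = 4 * (cc z r * \<beta>2 r)"
      using pu_local2'[OF oU' r KRf DD_mult[OF DD_const LR_D(1)[OF r]]] by simp
  qed
  have KRv: "\<forall>r\<in>U. pv (\<lambda>q. ln ((gauss_curv z q - normal_curv z n1 n2 q) / (gauss_curv z q + normal_curv z n1 n2 q))) r
     = - 4 * (cc z r * \<beta>1 r)"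
  proof (intro ballI)
    fix r assume r: "r \<in> U"
    show "pv (\<lambda>q. ln ((gauss_curv z q - normal_curv z n1 n2 q) / (gauss_curv z q + normal_curv z n1 n2 q))) r
     = - 4 * (cc z r * \<beta>1 r)"
      using pv_local2'[OF oU' r KRf DD_mult[OF DD_const LR_D(2)[OF r]]] by simp
  qed
  have lapKR: "lap (\<lambda>q. ln ((gauss_curv z q - normal_curv z n1 n2 q) / (gauss_curv z q + normal_curv z n1 n2 q))) p
      = 4 * (- 2 * (cc z p)\<^sup>2 * \<nu> p * \<mu> p)"
    unfolding lap_def second_u[OF p sms'(10) KRu] second_v[OF p sms'(9) KRv] using I(6) by algebra
  show "1/4 * ((gauss_curv z p)\<^sup>2 - (normal_curv z n1 n2 p)\<^sup>2) powr (1/4)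
        * lap (\<lambda>q. ln ((gauss_curv z q - normal_curv z n1 n2 q) / (gauss_curv z q + normal_curv z n1 n2 q))) p
        + normal_curv z n1 n2 p = 0"
    unfolding pw unfolding lapKR normal_eq'[OF p] using sw by algebra
qed

end

theorem mainTheorem9:
  fixes U :: "(real \<times> real) set"
    and z x y n1 n2 :: "real \<times> real \<Rightarrow> real^4"
    and \<nu> \<mu> \<gamma>1 \<gamma>2 \<beta>1 \<beta>2 :: "real \<times> real \<Rightarrow> real"
  assumes surf: "regular_surface U z"
    and frame: "geometric_frame U z x y n1 n2 \<nu> \<mu> \<gamma>1 \<gamma>2 \<beta>1 \<beta>2"
    and strongly_regular: "\<forall>p\<in>U. \<gamma>1 p * \<gamma>2 p \<noteq> 0"
    and canon: "canonical_params U z x y \<nu> \<mu>"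
  shows "\<forall>p\<in>U.
     \<gamma>1 p = pv (\<lambda>q. \<bar>(\<mu> q)\<^sup>2 - (\<nu> q)\<^sup>2\<bar> powr (1/4)) p \<and>
     \<gamma>2 p = pu (\<lambda>q. \<bar>(\<mu> q)\<^sup>2 - (\<nu> q)\<^sup>2\<bar> powr (1/4)) p \<and>
     \<beta>1 p = - (\<bar>(\<mu> p)\<^sup>2 - (\<nu> p)\<^sup>2\<bar> powr (1/4)) *
              pv (\<lambda>q. ln (sqrt \<bar>(\<mu> q + \<nu> q) / (\<mu> q - \<nu> q)\<bar>)) p \<and>
     \<beta>2 p = \<bar>(\<mu> p)\<^sup>2 - (\<nu> p)\<^sup>2\<bar> powr (1/4) *
              pu (\<lambda>q. ln (sqrt \<bar>(\<mu> q + \<nu> q) / (\<mu> q - \<nu> q)\<bar>)) p \<and>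
     1/4 * sqrt \<bar>(\<mu> p)\<^sup>2 - (\<nu> p)\<^sup>2\<bar> * lap (\<lambda>q. ln \<bar>(\<mu> q)\<^sup>2 - (\<nu> q)\<^sup>2\<bar>) p
        + (\<nu> p)\<^sup>2 + (\<mu> p)\<^sup>2 = 0 \<and>
     1/2 * sqrt \<bar>(\<mu> p)\<^sup>2 - (\<nu> p)\<^sup>2\<bar> * lap (\<lambda>q. ln \<bar>(\<mu> q + \<nu> q) / (\<mu> q - \<nu> q)\<bar>) p
        + 2 * \<nu> p * \<mu> p = 0 \<and>
     1/8 * ((gauss_curv z p)\<^sup>2 - (normal_curv z n1 n2 p)\<^sup>2) powr (1/4)
        * lap (\<lambda>q. ln ((gauss_curv z q)\<^sup>2 - (normal_curv z n1 n2 q)\<^sup>2)) p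
        - gauss_curv z p = 0 \<and>
     1/4 * ((gauss_curv z p)\<^sup>2 - (normal_curv z n1 n2 p)\<^sup>2) powr (1/4)
        * lap (\<lambda>q. ln ((gauss_curv z q - normal_curv z n1 n2 q) / (gauss_curv z q + normal_curv z n1 n2 q))) p
        + normal_curv z n1 n2 p = 0"
  using final[OF surf frame canon] by blast

end
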